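(* Let $p$ be a prime, let $A=\mathbb Z_{(p)}[a_1,\dots,a_p]$ and $\Gamma=A[r]$, with the Hopf algebroid structure described in the context. Then there are invariant classes $c_i\in A$, $2\le i\le p$, with $c_i$ of degree $2i(p-1)$, such that \[ H^*(A\otimes\mathbb Q,\Gamma\otimes\mathbb Q)=H^0(A\otimes\mathbb Q,\Gamma\otimes\mathbb Q)=\mathbb Q[c_2,\dots,c_p], \] i.e. the rational cohomology is concentrated in cohomological degree $0$ and is a polynomial algebra on $c_2,\dots,c_p$.
   Context: $(A,\Gamma)$ is the graded Hopf algebroid with $A=\mathbb Z_{(p)}[a_1,\dots,a_p]$, $|a_i|=2i(p-1)$, $\Gamma=A[r]$, $|r|=2(p-1)$. The left unit is the inclusion $A\to\Gamma$; the right unit is $\eta_R(a_i)=\sum_{j=0}^i\binom{p-j}{i-j}a_jr^{i-j}$ (with $a_0=1$), and $r$ is primitive: $\Delta(r)=r\otimes1+1\otimes r$. (Geometrically, this corepresents curves $y^{p-1}=x^p+a_1x^{p-1}+\dots+a_p$ with coordinate changes $x\mapsto x+r$.) $H^*(A,\Gamma)$ denotes the cohomology of the cobar complex, i.e. $\operatorname{Ext}_{\Gamma}(A,A)$; an element $x\in A$ is invariant if $\eta_R(x)=x$, and $H^0$ is the ring of invariants. The coefficient ring is the $p$-local integers. *)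

theory Defs
  imports "HOL-Library.Poly_Mapping" "HOL-Computational_Algebra.Computational_Algebra"
begin

(* Multivariate polynomials as finitely supported maps monomial => coefficient.
   Variables: Inl j = a_j (1 <= j <= p), Inr k = r_k (k >= 1, the k-th cobar variable). *)
type_synonym 'a mpoly = "((nat + nat) \<Rightarrow>\<^sub>0 nat) \<Rightarrow>\<^sub>0 'a"

definition PC :: "'b::zero \<Rightarrow> ('v \<Rightarrow>\<^sub>0 nat) \<Rightarrow>\<^sub>0 'b" where
  "PC c = Poly_Mapping.single 0 c"

definition PX :: "'v \<Rightarrow> ('v \<Rightarrow>\<^sub>0 nat) \<Rightarrow>\<^sub>0 'b::{zero,one}" where
  "PX v = Poly_Mapping.single (Poly_Mapping.single v 1) 1"

definition pvars :: "(('v \<Rightarrow>\<^sub>0 nat) \<Rightarrow>\<^sub>0 'b::zero) \<Rightarrow> 'v set" where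
  "pvars f = (\<Union>m\<in>Poly_Mapping.keys f. Poly_Mapping.keys m)"

definition psubst :: "('v \<Rightarrow> ('w \<Rightarrow>\<^sub>0 nat) \<Rightarrow>\<^sub>0 'b::comm_ring_1)
    \<Rightarrow> (('v \<Rightarrow>\<^sub>0 nat) \<Rightarrow>\<^sub>0 'b) \<Rightarrow> ('w \<Rightarrow>\<^sub>0 nat) \<Rightarrow>\<^sub>0 'b" where
  "psubst \<sigma> f = (\<Sum>m\<in>Poly_Mapping.keys f.
      PC (Poly_Mapping.lookup f m) * (\<Prod>v\<in>Poly_Mapping.keys m. \<sigma> v ^ Poly_Mapping.lookup m v))"

definition aa :: "nat \<Rightarrow> 'b::comm_ring_1 mpoly" where
  "aa j = (if j = 0 then 1 else PX (Inl j))"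

definition etaR_gen :: "nat \<Rightarrow> nat \<Rightarrow> nat \<Rightarrow> 'b::comm_ring_1 mpoly" where
  "etaR_gen p k j = (\<Sum>l=0..j. of_nat ((p - l) choose (j - l)) * aa l * PX (Inr k) ^ (j - l))"

definition eta_R :: "nat \<Rightarrow> 'b::comm_ring_1 mpoly \<Rightarrow> 'b mpoly" where
  "eta_R p f = psubst (\<lambda>v. case v of Inl j \<Rightarrow> etaR_gen p 1 j | Inr k \<Rightarrow> PX (Inr k)) f"

(* elements of A = Z_(p)[a_1..a_p], viewed inside Q[a_1..a_p] *)
definition p_local :: "nat \<Rightarrow> rat \<Rightarrow> bool" where
  "p_local p q = coprime (snd (quotient_of q)) (int p)"

definition in_A :: "nat \<Rightarrow> rat mpoly \<Rightarrow> bool" where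
  "in_A p c = (pvars c \<subseteq> Inl ` {1..p} \<and> (\<forall>m\<in>Poly_Mapping.keys c. p_local p (Poly_Mapping.lookup c m)))"

definition wt :: "nat \<Rightarrow> nat + nat \<Rightarrow> nat" where
  "wt p v = (case v of Inl j \<Rightarrow> 2 * j * (p - 1) | Inr _ \<Rightarrow> 2 * (p - 1))"

definition homogeneous_of_degree :: "nat \<Rightarrow> rat mpoly \<Rightarrow> nat \<Rightarrow> bool" where
  "homogeneous_of_degree p c d =
     (\<forall>m\<in>Poly_Mapping.keys c. (\<Sum>v\<in>Poly_Mapping.keys m. wt p v * Poly_Mapping.lookup m v) = d)"

(* Rational normalized cobar complex: Gamma_Q^{\<otimes>_A n} = A_Q[r_1..r_n] (the element
   a r^{i_1}|...|r^{i_n} corresponds to a r_1^{i_1}...r_n^{i_n}); normalized = in the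
   augmentation ideal in each tensor factor, i.e. vanishing when any r_k is set to 0. *)
definition cobar_space :: "nat \<Rightarrow> nat \<Rightarrow> rat mpoly set" where
  "cobar_space p n = {f. pvars f \<subseteq> Inl ` {1..p} \<union> Inr ` {1..n} \<and>
      (\<forall>k\<in>{1..n}. psubst (\<lambda>v. if v = Inr k then 0 else PX v) f = 0)}"

(* coface d_0: gamma_1|...|gamma_n  |->  1|gamma_1|...|gamma_n *)
definition face0 :: "nat \<Rightarrow> rat mpoly \<Rightarrow> rat mpoly" where
  "face0 p f = psubst (\<lambda>v. case v of Inl j \<Rightarrow> etaR_gen p 1 j | Inr k \<Rightarrow> PX (Inr (Suc k))) f"

(* coface d_i (1 <= i <= n): apply the coproduct Delta(r) = r|1 + 1|r to the i-th factor *)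
definition facei :: "nat \<Rightarrow> rat mpoly \<Rightarrow> rat mpoly" where
  "facei i f = psubst (\<lambda>v. case v of Inl j \<Rightarrow> PX (Inl j)
      | Inr k \<Rightarrow> (if k < i then PX (Inr k) else if k = i then PX (Inr i) + PX (Inr (Suc i))
                  else PX (Inr (Suc k)))) f"

(* cobar differential d^n : C^n -> C^{n+1}; the last coface appends |1, i.e. is the inclusion *)
definition cobar_d :: "nat \<Rightarrow> nat \<Rightarrow> rat mpoly \<Rightarrow> rat mpoly" where
  "cobar_d p n f = face0 p f + (\<Sum>i=1..n. (-1) ^ i * facei i f) + (-1) ^ (n + 1) * f"

end

theory Submission
  imports Defs
begin

lemma pm_expand: "(f :: 'a \<Rightarrow>\<^sub>0 'b::comm_monoid_add) = (\<Sum>m\<in>Poly_Mapping.keys f. Poly_Mapping.single m (Poly_Mapping.lookup f m))"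
proof (rule poly_mapping_eqI)
  fix k
  show "Poly_Mapping.lookup f k = Poly_Mapping.lookup (\<Sum>m\<in>Poly_Mapping.keys f. Poly_Mapping.single m (Poly_Mapping.lookup f m)) k"
    by (cases "k \<in> Poly_Mapping.keys f")
       (auto simp: lookup_sum lookup_single when_def in_keys_iff sum.delta' cong: if_cong)
qed

definition mon :: "('v \<Rightarrow> 'c::comm_monoid_mult) \<Rightarrow> ('v \<Rightarrow>\<^sub>0 nat) \<Rightarrow> 'c" where
  "mon \<sigma> m = (\<Prod>v\<in>Poly_Mapping.keys m. \<sigma> v ^ Poly_Mapping.lookup m v)"

lemma mon_superset: "finite S \<Longrightarrow> Poly_Mapping.keys m \<subseteq> S \<Longrightarrow> mon \<sigma> m = (\<Prod>v\<in>S. \<sigma> v ^ Poly_Mapping.lookup m v)"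
  unfolding mon_def by (rule prod.mono_neutral_left) (auto simp: in_keys_iff)

lemma mon_add: "mon \<sigma> (m1 + m2) = mon \<sigma> m1 * mon \<sigma> m2"
proof -
  let ?S = "Poly_Mapping.keys m1 \<union> Poly_Mapping.keys m2"
  have "mon \<sigma> (m1 + m2) = (\<Prod>v\<in>?S. \<sigma> v ^ Poly_Mapping.lookup (m1+m2) v)"
    by (rule mon_superset) (auto dest: keys_add[THEN subsetD])
  also have "\<dots> = (\<Prod>v\<in>?S. \<sigma> v ^ Poly_Mapping.lookup m1 v) * (\<Prod>v\<in>?S. \<sigma> v ^ Poly_Mapping.lookup m2 v)"
    by (simp add: lookup_add power_add prod.distrib)
  also have "\<dots> = mon \<sigma> m1 * mon \<sigma> m2"
    by (simp add: mon_superset[of ?S m1] mon_superset[of ?S m2])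
  finally show ?thesis .
qed

lemma mon_zero[simp]: "mon \<sigma> 0 = 1" by (simp add: mon_def)

lemma PC_0[simp]: "PC 0 = 0" by (simp add: PC_def)
lemma PC_add: "PC (a + b) = PC a + PC b" by (simp add: PC_def single_add)
lemma PC_mult: "PC (a * b) = PC a * PC b" by (simp add: PC_def mult_single)
lemma PC_1[simp]: "PC 1 = 1" by (simp add: PC_def)

lemma psubst_def': "psubst \<sigma> f = (\<Sum>m\<in>Poly_Mapping.keys f. PC (Poly_Mapping.lookup f m) * mon \<sigma> m)"
  by (simp add: psubst_def mon_def)

lemma psubst_superset: "finite S \<Longrightarrow> Poly_Mapping.keys f \<subseteq> S \<Longrightarrow>
   psubst \<sigma> f = (\<Sum>m\<in>S. PC (Poly_Mapping.lookup f m) * mon \<sigma> m)"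
  unfolding psubst_def' by (rule sum.mono_neutral_left) (auto simp: in_keys_iff)

lemma psubst_add: "psubst \<sigma> (f + g) = psubst \<sigma> f + psubst \<sigma> g"
proof -
  let ?S = "Poly_Mapping.keys f \<union> Poly_Mapping.keys g"
  have "psubst \<sigma> (f + g) = (\<Sum>m\<in>?S. PC (Poly_Mapping.lookup (f+g) m) * mon \<sigma> m)"
    by (rule psubst_superset) (auto dest: keys_add[THEN subsetD])
  also have "\<dots> = (\<Sum>m\<in>?S. PC (Poly_Mapping.lookup f m) * mon \<sigma> m) + (\<Sum>m\<in>?S. PC (Poly_Mapping.lookup g m) * mon \<sigma> m)"
    by (simp add: lookup_add PC_add distrib_right sum.distrib)
  also have "\<dots> = psubst \<sigma> f + psubst \<sigma> g"
    by (simp add: psubst_superset[of ?S f] psubst_superset[of ?S g])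
  finally show ?thesis .
qed

lemma psubst_0[simp]: "psubst \<sigma> 0 = 0" by (simp add: psubst_def)

lemma psubst_single: "psubst \<sigma> (Poly_Mapping.single m c) = PC c * mon \<sigma> m"
  by (simp add: psubst_def')

lemma psubst_sum: "psubst \<sigma> (sum F A) = (\<Sum>x\<in>A. psubst \<sigma> (F x))"
  by (induction A rule: infinite_finite_induct) (auto simp: psubst_add)

lemma psubst_mult: "psubst \<sigma> (f * g) = psubst \<sigma> f * psubst \<sigma> g"
proof -
  have "f * g = (\<Sum>m1\<in>Poly_Mapping.keys f. \<Sum>m2\<in>Poly_Mapping.keys g.
      Poly_Mapping.single (m1 + m2) (Poly_Mapping.lookup f m1 * Poly_Mapping.lookup g m2))"
    by (subst pm_expand[of f], subst pm_expand[of g]) (simp add: sum_product mult_single)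
  then have "psubst \<sigma> (f * g) = (\<Sum>m1\<in>Poly_Mapping.keys f. \<Sum>m2\<in>Poly_Mapping.keys g.
      PC (Poly_Mapping.lookup f m1) * mon \<sigma> m1 * (PC (Poly_Mapping.lookup g m2) * mon \<sigma> m2))"
    by (simp add: psubst_sum psubst_single PC_mult mon_add mult_ac)
  also have "\<dots> = psubst \<sigma> f * psubst \<sigma> g"
    by (simp add: psubst_def' sum_product)
  finally show ?thesis .
qed

lemma psubst_uminus: "psubst \<sigma> (- f) = - psubst \<sigma> f"
  using psubst_add[of \<sigma> f "-f"] by (simp add: minus_unique)

lemma psubst_diff: "psubst \<sigma> (f - g) = psubst \<sigma> f - psubst \<sigma> g"
  using psubst_add[of \<sigma> f "-g"] by (simp add: psubst_uminus)

lemma psubst_PC[simp]: "psubst \<sigma> (PC c) = PC c"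
  by (simp add: PC_def psubst_single)

lemma psubst_1[simp]: "psubst \<sigma> 1 = 1"
  using psubst_PC[of \<sigma> 1] by simp

lemma psubst_PX[simp]: "psubst \<sigma> (PX v) = \<sigma> v"
  by (simp add: PX_def psubst_single mon_def)

lemma psubst_power: "psubst \<sigma> (f ^ n) = psubst \<sigma> f ^ n"
  by (induction n) (auto simp: psubst_mult)

lemma psubst_prod: "psubst \<sigma> (prod F A) = (\<Prod>x\<in>A. psubst \<sigma> (F x))"
  by (induction A rule: infinite_finite_induct) (auto simp: psubst_mult)

lemma psubst_of_nat[simp]: "psubst \<sigma> (of_nat n) = of_nat n"
  by (induction n) (auto simp: psubst_add)

lemma psubst_of_int[simp]: "psubst \<sigma> (of_int n) = of_int n"
  by (cases n rule: int_cases) (auto simp: psubst_uminus psubst_diff)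

lemma psubst_neg1_pow[simp]: "psubst \<sigma> ((-1) ^ n) = (-1) ^ n"
  by (simp add: psubst_power psubst_uminus)

lemma psubst_mon: "psubst \<sigma> (mon \<tau> m) = mon (\<lambda>v. psubst \<sigma> (\<tau> v)) m"
  by (simp add: mon_def psubst_prod psubst_power)

lemma psubst_comp: "psubst \<sigma> (psubst \<tau> f) = psubst (\<lambda>v. psubst \<sigma> (\<tau> v)) f"
proof -
  have "psubst \<sigma> (psubst \<tau> f) = psubst \<sigma> (\<Sum>m\<in>Poly_Mapping.keys f. PC (Poly_Mapping.lookup f m) * mon \<tau> m)"
    by (simp only: psubst_def')
  also have "\<dots> = (\<Sum>m\<in>Poly_Mapping.keys f. PC (Poly_Mapping.lookup f m) * mon (\<lambda>v. psubst \<sigma> (\<tau> v)) m)"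
    by (simp only: psubst_sum psubst_mult psubst_PC psubst_mon)
  also have "\<dots> = psubst (\<lambda>v. psubst \<sigma> (\<tau> v)) f"
    by (simp only: psubst_def')
  finally show ?thesis .
qed

lemma psubst_cong: "(\<And>v. v \<in> pvars f \<Longrightarrow> \<sigma> v = \<tau> v) \<Longrightarrow> psubst \<sigma> f = psubst \<tau> f"
  unfolding psubst_def' mon_def pvars_def
  by (intro sum.cong refl arg_cong2[where f="(*)"] prod.cong arg_cong2[where f="power"]) fastforce+

lemma PX_pow: "(PX v :: ('v \<Rightarrow>\<^sub>0 nat) \<Rightarrow>\<^sub>0 'b::comm_ring_1) ^ n = Poly_Mapping.single (Poly_Mapping.single v n) 1"
  by (induction n) (auto simp: PX_def mult_single single_add[symmetric] add.commute)

lemma mon_PX: "(mon PX m :: ('v \<Rightarrow>\<^sub>0 nat) \<Rightarrow>\<^sub>0 'b::comm_ring_1) = Poly_Mapping.single m 1"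
proof -
  have "(\<Prod>v\<in>K. (PX v :: ('v \<Rightarrow>\<^sub>0 nat) \<Rightarrow>\<^sub>0 'b) ^ Poly_Mapping.lookup m v)
        = Poly_Mapping.single (\<Sum>v\<in>K. Poly_Mapping.single v (Poly_Mapping.lookup m v)) 1" if "finite K" for K
    using that
  proof (induction rule: finite_induct)
    case empty then show ?case by simp
  next
    case (insert x F) then show ?case by (simp add: PX_pow mult_single)
  qed
  then show ?thesis unfolding mon_def by (simp flip: pm_expand)
qed

lemma psubst_PX_id: "psubst PX f = f"
  by (simp add: psubst_def' mon_PX PC_def mult_single flip: pm_expand)

lemma pvars_add: "pvars (f + g) \<subseteq> pvars f \<union> pvars (g :: ('v \<Rightarrow>\<^sub>0 nat) \<Rightarrow>\<^sub>0 'b::comm_ring_1)"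
  unfolding pvars_def using keys_add[of f g] by auto

lemma pvars_uminus[simp]: "pvars (- f) = pvars (f :: ('v \<Rightarrow>\<^sub>0 nat) \<Rightarrow>\<^sub>0 'b::comm_ring_1)"
  unfolding pvars_def by (simp add: keys_def)

lemma pvars_mult: "pvars (f * g) \<subseteq> pvars f \<union> pvars (g :: ('v \<Rightarrow>\<^sub>0 nat) \<Rightarrow>\<^sub>0 'b::comm_ring_1)"
proof
  fix v assume "v \<in> pvars (f * g)"
  then obtain m where m: "m \<in> Poly_Mapping.keys (f * g)" "v \<in> Poly_Mapping.keys m" unfolding pvars_def by (rule UN_E)
  from m(1) keys_mult have "m \<in> {a + b | a b. a \<in> Poly_Mapping.keys f \<and> b \<in> Poly_Mapping.keys g}"
    by (rule subsetD[rotated])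
  then obtain a b where ab: "m = a + b" "a \<in> Poly_Mapping.keys f" "b \<in> Poly_Mapping.keys g"
    by blast
  from m(2) ab(1) keys_add[of a b] have "v \<in> Poly_Mapping.keys a \<or> v \<in> Poly_Mapping.keys b" by blast
  then show "v \<in> pvars f \<union> pvars g"
  proof
    assume "v \<in> Poly_Mapping.keys a" then have "v \<in> pvars f" unfolding pvars_def using ab(2) by (rule UN_I[rotated])
    then show ?thesis by (rule UnI1)
  next
    assume "v \<in> Poly_Mapping.keys b" then have "v \<in> pvars g" unfolding pvars_def using ab(3) by (rule UN_I[rotated])
    then show ?thesis by (rule UnI2)
  qed
qed

lemma pvars_PC[simp]: "pvars (PC c :: ('v \<Rightarrow>\<^sub>0 nat) \<Rightarrow>\<^sub>0 'b::comm_ring_1) = {}"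
  by (simp add: pvars_def PC_def)

lemma pvars_PX: "pvars (PX v :: ('v \<Rightarrow>\<^sub>0 nat) \<Rightarrow>\<^sub>0 'b::comm_ring_1) \<subseteq> {v}"
  by (simp add: pvars_def PX_def)

lemma pvars_0[simp]: "pvars (0 :: ('v \<Rightarrow>\<^sub>0 nat) \<Rightarrow>\<^sub>0 'b::comm_ring_1) = {}" by (simp add: pvars_def)
lemma pvars_1[simp]: "pvars (1 :: ('v \<Rightarrow>\<^sub>0 nat) \<Rightarrow>\<^sub>0 'b::comm_ring_1) = {}" by (simp add: pvars_def)

lemma pvars_of_nat[simp]: "pvars (of_nat n :: ('v \<Rightarrow>\<^sub>0 nat) \<Rightarrow>\<^sub>0 'b::comm_ring_1) = {}"
  by (simp add: pvars_def flip: single_of_nat)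
lemma pvars_of_int[simp]: "pvars (of_int n :: ('v \<Rightarrow>\<^sub>0 nat) \<Rightarrow>\<^sub>0 'b::comm_ring_1) = {}"
  by (simp add: pvars_def flip: single_of_int)

lemma pvars_multI: "pvars f \<subseteq> U \<Longrightarrow> pvars g \<subseteq> U \<Longrightarrow> pvars (f * (g :: ('v \<Rightarrow>\<^sub>0 nat) \<Rightarrow>\<^sub>0 'b::comm_ring_1)) \<subseteq> U"
  using pvars_mult[of f g] by (rule order_trans) simp

lemma pvars_addI: "pvars f \<subseteq> U \<Longrightarrow> pvars g \<subseteq> U \<Longrightarrow> pvars (f + g :: (_ \<Rightarrow>\<^sub>0 nat) \<Rightarrow>\<^sub>0 'b::comm_ring_1) \<subseteq> U"
  using pvars_add[of f g] by (rule order_trans) simp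

lemma pvars_sumI: "(\<And>x. x \<in> A \<Longrightarrow> pvars (F x) \<subseteq> U) \<Longrightarrow> pvars (sum F A :: ('v \<Rightarrow>\<^sub>0 nat) \<Rightarrow>\<^sub>0 'b::comm_ring_1) \<subseteq> U"
  by (induction A rule: infinite_finite_induct) (simp_all add: pvars_addI)

lemma pvars_powerI: "pvars f \<subseteq> U \<Longrightarrow> pvars (f ^ n :: ('v \<Rightarrow>\<^sub>0 nat) \<Rightarrow>\<^sub>0 'b::comm_ring_1) \<subseteq> U"
  by (induction n) (simp_all add: pvars_multI)

lemma pvars_prodI: "(\<And>x. x \<in> A \<Longrightarrow> pvars (F x) \<subseteq> U) \<Longrightarrow> pvars (prod F A :: ('v \<Rightarrow>\<^sub>0 nat) \<Rightarrow>\<^sub>0 'b::comm_ring_1) \<subseteq> U"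
  by (induction A rule: infinite_finite_induct) (simp_all add: pvars_multI)

lemma pvars_psubstI:
  assumes "\<And>v. v \<in> pvars f \<Longrightarrow> pvars (\<sigma> v) \<subseteq> U"
  shows "pvars (psubst \<sigma> f) \<subseteq> U"
  unfolding psubst_def
proof (intro pvars_sumI pvars_multI pvars_prodI pvars_powerI)
  fix m v assume "m \<in> Poly_Mapping.keys f" "v \<in> Poly_Mapping.keys m"
  then have "v \<in> pvars f" unfolding pvars_def by blast
  then show "pvars (\<sigma> v) \<subseteq> U" by (rule assms)
qed simp

definition EE :: "nat \<Rightarrow> (nat \<Rightarrow> 'a::comm_ring_1) \<Rightarrow> 'a \<Rightarrow> nat \<Rightarrow> 'a" where
  "EE p b \<rho> j = (\<Sum>l=0..j. of_nat ((p - l) choose (j - l)) * b l * \<rho> ^ (j - l))"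

lemma EE_0[simp]: "EE p b \<rho> 0 = b 0" by (simp add: EE_def)

lemma EE_rho0: "EE p b 0 j = b j"
proof -
  have "EE p b 0 j = (\<Sum>l=0..j. if l = j then b l else 0)"
    unfolding EE_def by (intro sum.cong) (auto simp: power_0_left)
  then show ?thesis by simp
qed

lemma inner_binom:
  fixes \<rho> Y :: "'a::comm_ring_1"
  assumes "K \<le> N"
  shows "(\<Sum>k=0..K. of_nat ((N - k) choose (K - k)) * of_nat (N choose k) * \<rho> ^ k * Y ^ (K - k))
       = of_nat (N choose K) * (\<rho> + Y) ^ K"
proof -
  have "(\<Sum>k=0..K. of_nat ((N - k) choose (K - k)) * of_nat (N choose k) * \<rho> ^ k * Y ^ (K - k))
      = (\<Sum>k=0..K. of_nat (N choose K) * (of_nat (K choose k) * \<rho> ^ k * Y ^ (K - k)))"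
  proof (intro sum.cong refl)
    fix k assume "k \<in> {0..K}"
    then have "(N choose K) * (K choose k) = (N choose k) * ((N - k) choose (K - k))"
      using assms by (intro choose_mult) auto
    then have "(of_nat ((N - k) choose (K - k)) * of_nat (N choose k) :: 'a) = of_nat (N choose K) * of_nat (K choose k)"
      by (metis (mono_tags) mult.commute of_nat_mult)
    then show "of_nat ((N - k) choose (K - k)) * of_nat (N choose k) * \<rho> ^ k * Y ^ (K - k)
        = of_nat (N choose K) * (of_nat (K choose k) * \<rho> ^ k * Y ^ (K - k))"
      by (simp add: mult_ac)
  qed
  also have "\<dots> = of_nat (N choose K) * (\<rho> + Y) ^ K"
    by (simp add: binomial_ring sum_distrib_left atLeast0AtMost)
  finally show ?thesis .
qed

lemma EE_comp:
  assumes "j \<le> p"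
  shows "EE p (EE p b \<rho>) Y j = EE p b (\<rho> + Y) j"
proof -
  let ?f = "\<lambda>l m. of_nat ((p - l) choose (j - l)) * (of_nat ((p - m) choose (l - m)) * b m * \<rho> ^ (l - m)) * Y ^ (j - l)"
  have "EE p (EE p b \<rho>) Y j = (\<Sum>l=0..j. \<Sum>m=0..j. if m \<le> l then ?f l m else 0)"
    unfolding EE_def
  proof (rule sum.cong[OF refl])
    fix l assume l: "l \<in> {0..j}"
    have "(\<Sum>m=0..j. if m \<le> l then ?f l m else 0) = (\<Sum>m\<in>{0..j} \<inter> {m. m \<le> l}. ?f l m)"
      by (simp add: sum.If_cases)
    also have "{0..j} \<inter> {m. m \<le> l} = {0..l}" using l by auto
    finally show "of_nat ((p - l) choose (j - l)) * (\<Sum>m=0..l. of_nat ((p - m) choose (l - m)) * b m * \<rho> ^ (l - m)) * Y ^ (j - l)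
        = (\<Sum>m=0..j. if m \<le> l then ?f l m else 0)"
      by (simp add: sum_distrib_left sum_distrib_right)
  qed
  also have "\<dots> = (\<Sum>m=0..j. \<Sum>l=0..j. if m \<le> l then ?f l m else 0)"
    by (rule sum.swap)
  also have "\<dots> = (\<Sum>m=0..j. \<Sum>l=m..j. ?f l m)"
  proof (rule sum.cong[OF refl])
    fix m assume "m \<in> {0..j}"
    have "(\<Sum>l=0..j. if m \<le> l then ?f l m else 0) = (\<Sum>l\<in>{0..j} \<inter> {l. m \<le> l}. ?f l m)"
      by (simp add: sum.If_cases)
    also have "{0..j} \<inter> {l. m \<le> l} = {m..j}" by auto
    finally show "(\<Sum>l=0..j. if m \<le> l then ?f l m else 0) = (\<Sum>l=m..j. ?f l m)" by simp
  qed
  also have "\<dots> = (\<Sum>m=0..j. of_nat ((p - m) choose (j - m)) * b m * (\<rho> + Y) ^ (j - m))"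
  proof (rule sum.cong[OF refl])
    fix m assume m: "m \<in> {0..j}"
    have "(\<Sum>l=m..j. ?f l m) = (\<Sum>k=0..j-m. ?f (k + m) m)"
      using m sum.shift_bounds_cl_nat_ivl[of "\<lambda>l. ?f l m" 0 m "j - m"] by simp
    also have "\<dots> = b m * (\<Sum>k=0..j-m. of_nat (((p-m) - k) choose ((j-m) - k)) * of_nat ((p-m) choose k) * \<rho> ^ k * Y ^ ((j-m) - k))"
      unfolding sum_distrib_left
      by (intro sum.cong refl) (simp add: mult_ac diff_diff_add add.commute)
    also have "\<dots> = b m * (of_nat ((p-m) choose (j-m)) * (\<rho> + Y) ^ (j-m))"
      using assms m by (subst inner_binom) auto
    finally show "(\<Sum>l=m..j. ?f l m) = of_nat ((p - m) choose (j - m)) * b m * (\<rho> + Y) ^ (j - m)"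
      by (simp add: mult_ac)
  qed
  also have "\<dots> = EE p b (\<rho> + Y) j" by (simp add: EE_def)
  finally show ?thesis .
qed

lemma PC_pow: "PC a ^ n = PC (a ^ n)" by (induction n) (simp_all add: PC_mult)
lemma of_nat_PC: "(of_nat n :: ('v \<Rightarrow>\<^sub>0 nat) \<Rightarrow>\<^sub>0 'b::comm_ring_1) = PC (of_nat n)" by (simp add: PC_def)

lemma psubst_EE: "psubst \<sigma> (EE p b Y j) = EE p (\<lambda>l. psubst \<sigma> (b l)) (psubst \<sigma> Y) j"
  by (simp add: EE_def psubst_sum psubst_mult psubst_power)

lemma EE_scale: "EE p (\<lambda>l. u ^ l * b l) (u * Y) j = u ^ j * EE p b Y j"
  unfolding EE_def sum_distrib_left
proof (rule sum.cong[OF refl])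
  fix l assume "l \<in> {0..j}"
  then have e: "u ^ j = u ^ l * u ^ (j - l)" by (simp add: power_add[symmetric])
  show "of_nat ((p - l) choose (j - l)) * (u ^ l * b l) * (u * Y) ^ (j - l) =
        u ^ j * (of_nat ((p - l) choose (j - l)) * b l * Y ^ (j - l))"
    by (simp add: e power_mult_distrib mult_ac)
qed

lemma psubst_fix: "(\<And>v. v \<in> pvars f \<Longrightarrow> \<sigma> v = PX v) \<Longrightarrow> psubst \<sigma> f = f"
  using psubst_cong[of f \<sigma> PX] by (simp add: psubst_PX_id)

lemma etaR_gen_EE: "etaR_gen p k j = EE p aa (PX (Inr k)) j"
  by (simp add: etaR_gen_def EE_def)

definition sP :: "nat \<Rightarrow> rat mpoly" where "sP p = PC (1 / of_nat p) * PX (Inl 1)"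
definition a0 :: "nat \<Rightarrow> nat \<Rightarrow> rat mpoly" where "a0 p j = EE p aa (- sP p) j"
definition hsub :: "nat \<Rightarrow> nat + nat \<Rightarrow> rat mpoly" where
  "hsub p v = (case v of Inl j \<Rightarrow> a0 p j | Inr k \<Rightarrow> if k = 1 then sP p else PX (Inr (k - 1)))"
definition hh :: "nat \<Rightarrow> rat mpoly \<Rightarrow> rat mpoly" where "hh p f = psubst (hsub p) f"
definition f0sub :: "nat \<Rightarrow> nat + nat \<Rightarrow> rat mpoly" where
  "f0sub p = (\<lambda>v. case v of Inl j \<Rightarrow> etaR_gen p 1 j | Inr k \<Rightarrow> PX (Inr (Suc k)))"
definition fisub :: "nat \<Rightarrow> nat + nat \<Rightarrow> rat mpoly" where
  "fisub i = (\<lambda>v. case v of Inl j \<Rightarrow> PX (Inl j)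
      | Inr k \<Rightarrow> (if k < i then PX (Inr k) else if k = i then PX (Inr i) + PX (Inr (Suc i))
                  else PX (Inr (Suc k))))"
definition etasub :: "nat \<Rightarrow> nat + nat \<Rightarrow> rat mpoly" where
  "etasub p = (\<lambda>v. case v of Inl j \<Rightarrow> etaR_gen p 1 j | Inr k \<Rightarrow> PX (Inr k))"

lemma face0_eq: "face0 p f = psubst (f0sub p) f" by (simp add: face0_def f0sub_def)
lemma facei_eq: "facei i f = psubst (fisub i) f" by (simp add: facei_def fisub_def)
lemma eta_R_eq: "eta_R p f = psubst (etasub p) f" by (simp add: eta_R_def etasub_def)

lemma aa_subst:
  assumes "\<And>l. l \<ge> 1 \<Longrightarrow> \<sigma> (Inl l) = EE p aa \<rho> l"
  shows "psubst \<sigma> (aa l) = EE p aa \<rho> l"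
  using assms[of l] by (cases "l = 0") (auto simp: aa_def)

lemma EE_one: "EE p b \<rho> (Suc 0) = of_nat p * b 0 * \<rho> + b 1"
  by (simp add: EE_def)

lemma PC_inv_p: "p > 0 \<Longrightarrow> PC (1 / of_nat p :: rat) * of_nat p = (1 :: rat mpoly)"
  by (simp add: of_nat_PC PC_mult[symmetric])

lemma act_s:
  assumes "p > 0" "\<And>l. l \<ge> 1 \<Longrightarrow> \<sigma> (Inl l) = EE p aa \<rho> l"
  shows "psubst \<sigma> (sP p) = sP p + \<rho>"
proof -
  have "psubst \<sigma> (sP p) = PC (1 / of_nat p) * (of_nat p * \<rho> + PX (Inl 1))"
    using assms(2)[of 1] by (simp add: sP_def psubst_mult EE_one aa_def)
  also have "\<dots> = (PC (1 / of_nat p) * of_nat p) * \<rho> + sP p"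
    by (simp add: sP_def algebra_simps)
  also have "\<dots> = sP p + \<rho>" using PC_inv_p[OF assms(1)] by simp
  finally show ?thesis .
qed

lemma act_a0:
  assumes "p > 0" "j \<le> p" "\<And>l. l \<ge> 1 \<Longrightarrow> \<sigma> (Inl l) = EE p aa \<rho> l"
  shows "psubst \<sigma> (a0 p j) = a0 p j"
proof -
  have "psubst \<sigma> (a0 p j) = EE p (\<lambda>l. psubst \<sigma> (aa l)) (- (sP p + \<rho>)) j"
    unfolding a0_def psubst_EE using act_s[OF assms(1,3)] by (simp add: psubst_uminus)
  also have "\<dots> = EE p (EE p aa \<rho>) (- (sP p + \<rho>)) j"
    using aa_subst[of \<sigma> p \<rho>, OF assms(3)] by simp
  also have "\<dots> = EE p aa (\<rho> + - (sP p + \<rho>)) j" by (rule EE_comp[OF assms(2)])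
  also have "\<dots> = a0 p j" by (simp add: a0_def)
  finally show ?thesis .
qed

lemma pvars_aa: "pvars (aa l :: rat mpoly) \<subseteq> (if l = 0 then {} else {Inl l})"
  by (simp add: aa_def pvars_PX)

lemma pvars_sP: "pvars (sP p) \<subseteq> {Inl 1}"
  unfolding sP_def by (intro pvars_multI) (simp_all add: pvars_PX)

lemma pvars_EE:
  assumes "\<And>l. l \<le> j \<Longrightarrow> pvars (b l) \<subseteq> U" "pvars Y \<subseteq> U"
  shows "pvars (EE p b Y j :: rat mpoly) \<subseteq> U"
  unfolding EE_def
  by (intro pvars_sumI pvars_multI pvars_powerI assms) auto

lemma pvars_a0: "pvars (a0 p j) \<subseteq> Inl ` {1..max 1 j}"
  unfolding a0_def
proof (rule pvars_EE)
  fix l assume lj: "l \<le> j"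
  show "pvars (aa l :: rat mpoly) \<subseteq> Inl ` {1..max 1 j}"
  proof (cases "l = 0")
    case True then show ?thesis by (simp add: aa_def)
  next
    case False
    then have "pvars (aa l :: rat mpoly) \<subseteq> {Inl l}" using pvars_aa[of l] by simp
    moreover have "{Inl l :: nat + nat} \<subseteq> Inl ` {1..max 1 j}" using False lj by auto
    ultimately show ?thesis by (rule order_trans)
  qed
next
  show "pvars (- sP p) \<subseteq> Inl ` {1..max 1 j}" using pvars_sP[of p] by auto
qed

lemma hsub_Inl: "hsub p (Inl l) = EE p aa (- sP p) l" by (simp add: hsub_def a0_def)
lemma f0sub_Inl: "f0sub p (Inl l) = EE p aa (PX (Inr 1)) l" by (simp add: f0sub_def etaR_gen_EE)
lemma etasub_Inl: "etasub p (Inl l) = EE p aa (PX (Inr 1)) l" by (simp add: etasub_def etaR_gen_EE)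

lemma h_face0:
  assumes "p > 0" "pvars F \<subseteq> Inl ` {1..p} \<union> Inr ` {1..n}"
  shows "hh p (face0 p F) = F"
proof -
  have "hh p (face0 p F) = psubst (\<lambda>v. psubst (hsub p) (f0sub p v)) F"
    by (simp add: hh_def face0_eq psubst_comp)
  also have "\<dots> = F"
  proof (rule psubst_fix)
    fix v assume "v \<in> pvars F"
    with assms(2) consider (l) j where "v = Inl j" "1 \<le> j" "j \<le> p" | (r) k where "v = Inr k" "1 \<le> k"
      by auto
    then show "psubst (hsub p) (f0sub p v) = PX v"
    proof cases
      case l
      have "psubst (hsub p) (f0sub p v) = EE p (\<lambda>l. psubst (hsub p) (aa l)) (sP p) j"
        using l by (simp add: f0sub_Inl psubst_EE hsub_def)
      also have "\<dots> = EE p (EE p aa (- sP p)) (sP p) j"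
        using aa_subst[of "hsub p" p "- sP p"] by (simp add: hsub_Inl)
      also have "\<dots> = EE p aa (- sP p + sP p) j" using l by (simp add: EE_comp)
      also have "\<dots> = PX v" using l by (simp add: EE_rho0 aa_def)
      finally show ?thesis .
    next
      case r then show ?thesis by (simp add: f0sub_def hsub_def)
    qed
  qed
  finally show ?thesis .
qed

lemma face0_h:
  assumes "p > 0" "pvars F \<subseteq> Inl ` {1..p} \<union> Inr ` {1..n}"
  shows "face0 p (hh p F) = hh p (facei 1 F)"
proof -
  have "face0 p (hh p F) = psubst (\<lambda>v. psubst (f0sub p) (hsub p v)) F"
    by (simp add: hh_def face0_eq psubst_comp)
  also have "\<dots> = psubst (\<lambda>v. psubst (hsub p) (fisub 1 v)) F"
  proof (rule psubst_cong)
    fix v assume "v \<in> pvars F"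
    with assms(2) consider (l) j where "v = Inl j" "1 \<le> j" "j \<le> p" | (r1) "v = Inr 1"
      | (r) k where "v = Inr k" "2 \<le> k"
      by force
    then show "psubst (f0sub p) (hsub p v) = psubst (hsub p) (fisub 1 v)"
    proof cases
      case l
      then show ?thesis using act_a0[OF assms(1) l(3), of "f0sub p" "PX (Inr 1)"]
        by (simp add: hsub_def fisub_def f0sub_Inl)
    next
      case r1
      then show ?thesis using act_s[OF assms(1), of "f0sub p" "PX (Inr 1)"]
        by (simp add: hsub_def fisub_def f0sub_Inl psubst_add add.commute)
    next
      case r then show ?thesis by (simp add: f0sub_def hsub_def fisub_def)
    qed
  qed
  also have "\<dots> = hh p (facei 1 F)" by (simp add: hh_def facei_eq psubst_comp)
  finally show ?thesis .
qed

lemma fisub_fix_Inl: "pvars f \<subseteq> range Inl \<Longrightarrow> psubst (fisub i) f = f"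
  by (rule psubst_fix) (auto simp: fisub_def)

lemma facei_h:
  assumes "p > 0" "i \<ge> 1" "pvars F \<subseteq> Inl ` {1..p} \<union> Inr ` {1..n}"
  shows "facei i (hh p F) = hh p (facei (Suc i) F)"
proof -
  have "facei i (hh p F) = psubst (\<lambda>v. psubst (fisub i) (hsub p v)) F"
    by (simp add: hh_def facei_eq psubst_comp)
  also have "\<dots> = psubst (\<lambda>v. psubst (hsub p) (fisub (Suc i) v)) F"
  proof (rule psubst_cong)
    fix v assume "v \<in> pvars F"
    with assms(3) consider (l) j where "v = Inl j" "1 \<le> j" "j \<le> p" | (r1) "v = Inr 1"
      | (r) k where "v = Inr k" "2 \<le> k"
      by force
    then show "psubst (fisub i) (hsub p v) = psubst (hsub p) (fisub (Suc i) v)"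
    proof cases
      case l
      have "psubst (fisub i) (a0 p j) = a0 p j"
        using pvars_a0[of p j] by (intro fisub_fix_Inl) auto
      then show ?thesis using l by (simp add: hsub_def fisub_def)
    next
      case r1
      have "psubst (fisub i) (sP p) = sP p"
        using pvars_sP[of p] by (intro fisub_fix_Inl) auto
      then show ?thesis using r1 assms(2) by (simp add: hsub_def fisub_def)
    next
      case r
      then show ?thesis using assms(2)
        by (auto simp: hsub_def fisub_def psubst_add Suc_diff_Suc)
    qed
  qed
  also have "\<dots> = hh p (facei (Suc i) F)" by (simp add: hh_def facei_eq psubst_comp)
  finally show ?thesis .
qed

lemma hh_add: "hh p (f + g) = hh p f + hh p g" by (simp add: hh_def psubst_add)
lemma hh_mult: "hh p (f * g) = hh p f * hh p g" by (simp add: hh_def psubst_mult)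
lemma hh_sum: "hh p (sum F A) = (\<Sum>x\<in>A. hh p (F x))" by (simp add: hh_def psubst_sum)
lemma hh_neg1: "hh p ((-1) ^ n) = (-1) ^ n" by (simp add: hh_def)
lemma hh_diff: "hh p (f - g) = hh p f - hh p g" by (simp add: hh_def psubst_diff)
lemma hh_uminus: "hh p (- f) = - hh p f" by (simp add: hh_def psubst_uminus)
lemma hh_0[simp]: "hh p 0 = 0" by (simp add: hh_def)

lemma homotopy:
  assumes p: "p > 0" and F: "pvars F \<subseteq> Inl ` {1..p} \<union> Inr ` {1..Suc m}"
  shows "cobar_d p m (hh p F) + hh p (cobar_d p (Suc m) F) = F"
proof -
  let ?T = "(\<Sum>i=1..m. (-1) ^ i * hh p (facei (Suc i) F))"
  have A: "hh p (cobar_d p (Suc m) F) = F + (\<Sum>i=1..Suc m. (-1) ^ i * hh p (facei i F)) + (-1) ^ (Suc m + 1) * hh p F"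
    unfolding cobar_d_def by (simp add: hh_add hh_diff hh_uminus hh_mult hh_sum hh_neg1 h_face0[OF p F])
  have B: "cobar_d p m (hh p F) = hh p (facei 1 F) + ?T + (-1) ^ (m + 1) * hh p F"
    unfolding cobar_d_def face0_h[OF p F]
    using facei_h[OF p _ F] by simp
  have S: "(\<Sum>i=1..Suc m. (-1) ^ i * hh p (facei i F)) = - hh p (facei 1 F) - ?T"
  proof -
    have "(\<Sum>i=1..Suc m. (-1) ^ i * hh p (facei i F)) = (-1) ^ 1 * hh p (facei 1 F) + (\<Sum>i=Suc 1..Suc m. (-1) ^ i * hh p (facei i F))"
      by (rule sum.atLeast_Suc_atMost) simp
    also have "(\<Sum>i=Suc 1..Suc m. (-1) ^ i * hh p (facei i F)) = (\<Sum>i=1..m. (-1) ^ Suc i * hh p (facei (Suc i) F))"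
      by (rule sum.shift_bounds_cl_Suc_ivl)
    also have "\<dots> = - ?T" by (simp add: sum_negf)
    finally show ?thesis by simp
  qed
  show ?thesis using A B S by simp
qed

lemma hh_cobar_space:
  assumes p: "p > 0" and F: "F \<in> cobar_space p (Suc m)"
  shows "hh p F \<in> cobar_space p m"
proof -
  from F have Fv: "pvars F \<subseteq> Inl ` {1..p} \<union> Inr ` {1..Suc m}"
    and Fz: "\<And>k. k \<in> {1..Suc m} \<Longrightarrow> psubst (\<lambda>v. if v = Inr k then 0 else PX v) F = 0"
    by (auto simp: cobar_space_def)
  have "pvars (hh p F) \<subseteq> Inl ` {1..p} \<union> Inr ` {1..m}"
    unfolding hh_def
  proof (rule pvars_psubstI)
    fix v assume "v \<in> pvars F"
    with Fv consider (l) j where "v = Inl j" "1 \<le> j" "j \<le> p" | (r1) "v = Inr 1"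
      | (r) k where "v = Inr k" "2 \<le> k" "k \<le> Suc m"
      by force
    then show "pvars (hsub p v) \<subseteq> Inl ` {1..p} \<union> Inr ` {1..m}"
    proof cases
      case l
      have "Inl ` {1..max 1 j} \<subseteq> (Inl ` {1..p} :: (nat + nat) set)" using l p by auto
      then show ?thesis using l pvars_a0[of p j] by (auto simp: hsub_def)
    next
      case r1 then show ?thesis using pvars_sP[of p] p by (auto simp: hsub_def)
    next
      case r
      have pv: "pvars (PX (Inr (k - 1)) :: rat mpoly) \<subseteq> {Inr (k - 1)}" by (rule pvars_PX)
      have "k - 1 \<in> {1..m}" using r by auto
      then have "Inr (k - 1) \<in> Inr ` {1..m}" by (rule imageI)
      then have "{Inr (k - 1)} \<subseteq> Inl ` {1..p} \<union> Inr ` {1..m}" by blast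
      with pv have "pvars (PX (Inr (k - 1)) :: rat mpoly) \<subseteq> Inl ` {1..p} \<union> Inr ` {1..m}"
        by (rule order_trans)
      moreover have "hsub p v = PX (Inr (k - 1))" using r by (simp add: hsub_def)
      ultimately show ?thesis by simp
    qed
  qed
  moreover have "psubst (\<lambda>v. if v = Inr k then 0 else PX v) (hh p F) = 0" if k: "k \<in> {1..m}" for k
  proof -
    let ?z = "\<lambda>k v. if v = Inr k then 0 else PX v :: rat mpoly"
    have "psubst (?z k) (hh p F) = psubst (\<lambda>v. psubst (?z k) (hsub p v)) F"
      by (simp add: hh_def psubst_comp)
    also have "\<dots> = psubst (\<lambda>v. psubst (hsub p) (?z (Suc k) v)) F"
    proof (rule psubst_cong)
      fix v assume "v \<in> pvars F"
      with Fv consider (l) j where "v = Inl j" | (r1) "v = Inr 1"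
        | (r) k' where "v = Inr k'" "2 \<le> k'"
        by force
      then show "psubst (?z k) (hsub p v) = psubst (hsub p) (?z (Suc k) v)"
      proof cases
        case l
        have "psubst (?z k) (a0 p j) = a0 p j"
          using pvars_a0[of p j] by (intro psubst_fix) auto
        then show ?thesis using l by (simp add: hsub_def)
      next
        case r1
        have "psubst (?z k) (sP p) = sP p"
          using pvars_sP[of p] by (intro psubst_fix) auto
        then show ?thesis using r1 k by (simp add: hsub_def)
      next
        case r then show ?thesis using k by (auto simp: hsub_def)
      qed
    qed
    also have "\<dots> = hh p (psubst (?z (Suc k)) F)" by (simp add: hh_def psubst_comp)
    also have "\<dots> = 0" using Fz[of "Suc k"] k by simp
    finally show ?thesis .
  qed
  ultimately show ?thesis by (auto simp: cobar_space_def)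
qed

lemma acyclic:
  assumes p: "p > 0"
  shows "\<forall>n\<ge>1. \<forall>f\<in>cobar_space p n. cobar_d p n f = 0 \<longrightarrow>
          (\<exists>g\<in>cobar_space p (n - 1). cobar_d p (n - 1) g = f)"
proof (intro allI impI ballI)
  fix n f assume n: "n \<ge> 1" and f: "f \<in> cobar_space p n" and c: "cobar_d p n f = 0"
  obtain m where m: "n = Suc m" using n by (cases n) auto
  have fv: "pvars f \<subseteq> Inl ` {1..p} \<union> Inr ` {1..Suc m}" using f m by (simp add: cobar_space_def)
  have "cobar_d p m (hh p f) = f" using homotopy[OF p fv] c m by simp
  moreover have "hh p f \<in> cobar_space p m" using hh_cobar_space[OF p] f m by simp
  ultimately show "\<exists>g\<in>cobar_space p (n - 1). cobar_d p (n - 1) g = f" using m by auto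
qed

definition cc :: "nat \<Rightarrow> nat \<Rightarrow> rat mpoly" where "cc p i = of_nat p ^ i * a0 p i"

lemma p_sP: "p > 0 \<Longrightarrow> of_nat p * sP p = PX (Inl 1)"
proof -
  assume p: "p > 0"
  have "of_nat p * sP p = (PC (1 / of_nat p) * of_nat p) * PX (Inl 1)" by (simp add: sP_def mult_ac)
  then show ?thesis using PC_inv_p[OF p] by simp
qed

lemma cc_alt: "p > 0 \<Longrightarrow> cc p i = EE p (\<lambda>l. of_nat p ^ l * aa l) (- PX (Inl 1)) i"
proof -
  assume p: "p > 0"
  have e: "- PX (Inl 1) = of_nat p * (- sP p)" using p_sP[OF p] by simp
  show ?thesis unfolding cc_def a0_def e by (rule EE_scale[symmetric])
qed

lemma cc_eta: "p > 0 \<Longrightarrow> i \<le> p \<Longrightarrow> eta_R p (cc p i) = cc p i"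
  unfolding eta_R_eq cc_def
  by (simp add: psubst_mult psubst_power act_a0[where \<rho>="PX (Inr 1)"] etasub_Inl)

lemma cc_face0: "p > 0 \<Longrightarrow> i \<le> p \<Longrightarrow> face0 p (cc p i) = cc p i"
  unfolding face0_eq cc_def
  by (simp add: psubst_mult psubst_power act_a0[where \<rho>="PX (Inr 1)"] f0sub_Inl)

lemma pvars_cc: "p > 0 \<Longrightarrow> i \<le> p \<Longrightarrow> pvars (cc p i) \<subseteq> Inl ` {1..p}"
  unfolding cc_def
proof (intro pvars_multI pvars_powerI)
  assume "p > 0" "i \<le> p"
  then have "Inl ` {1..max 1 i} \<subseteq> (Inl ` {1..p} :: (nat + nat) set)" by auto
  then show "pvars (a0 p i) \<subseteq> Inl ` {1..p}" using pvars_a0[of p i] by (rule order_trans[rotated])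
qed simp

definition intc :: "(('v \<Rightarrow>\<^sub>0 nat) \<Rightarrow>\<^sub>0 rat) \<Rightarrow> bool" where "intc f = (\<forall>m. Poly_Mapping.lookup f m \<in> \<int>)"

lemma mult_expand: "(f :: ('v \<Rightarrow>\<^sub>0 nat) \<Rightarrow>\<^sub>0 'b::comm_ring_1) * g = (\<Sum>m1\<in>Poly_Mapping.keys f. \<Sum>m2\<in>Poly_Mapping.keys g.
      Poly_Mapping.single (m1 + m2) (Poly_Mapping.lookup f m1 * Poly_Mapping.lookup g m2))"
  by (subst pm_expand[of f], subst pm_expand[of g]) (simp add: sum_product mult_single)

lemma intc_mult: "intc f \<Longrightarrow> intc g \<Longrightarrow> intc (f * g)"
  unfolding intc_def
proof
  fix k assume f: "\<forall>m. Poly_Mapping.lookup f m \<in> \<int>" and g: "\<forall>m. Poly_Mapping.lookup g m \<in> \<int>"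
  show "Poly_Mapping.lookup (f * g) k \<in> \<int>"
    unfolding mult_expand[of f g] lookup_sum lookup_single
    using f g by (intro Ints_sum) (auto simp: when_def)
qed

lemma intc_add: "intc f \<Longrightarrow> intc g \<Longrightarrow> intc (f + g)"
  by (simp add: intc_def lookup_add)
lemma intc_uminus: "intc f \<Longrightarrow> intc (- f)"
  by (simp add: intc_def)
lemma intc_1: "intc 1"
  by (simp add: intc_def lookup_one when_def)
lemma intc_of_nat: "intc (of_nat n)"
  by (simp add: intc_def lookup_of_nat when_def)
lemma intc_PX: "intc (PX v)"
  by (simp add: intc_def PX_def lookup_single when_def)
lemma intc_power: "intc f \<Longrightarrow> intc (f ^ n)"
  by (induction n) (simp_all add: intc_1 intc_mult)
lemma intc_0: "intc 0" by (simp add: intc_def)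
lemma intc_sum: "(\<And>x. x \<in> A \<Longrightarrow> intc (F x)) \<Longrightarrow> intc (sum F A)"
  by (induction A rule: infinite_finite_induct) (simp_all add: intc_add intc_0)

lemma intc_aa: "intc (aa l :: rat mpoly)"
  by (simp add: aa_def intc_1 intc_PX)

lemma intc_cc: "p > 0 \<Longrightarrow> intc (cc p i)"
  unfolding cc_alt EE_def
  by (intro intc_sum intc_mult intc_of_nat intc_power intc_aa intc_uminus intc_PX)

lemma in_A_cc: "p > 0 \<Longrightarrow> i \<le> p \<Longrightarrow> in_A p (cc p i)"
  unfolding in_A_def
proof (intro conjI pvars_cc ballI)
  fix m assume "p > 0"
  then have "Poly_Mapping.lookup (cc p i) m \<in> \<int>" using intc_cc unfolding intc_def by blast
  then obtain z where "Poly_Mapping.lookup (cc p i) m = of_int z" by (elim Ints_cases)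
  then show "p_local p (Poly_Mapping.lookup (cc p i) m)" by (simp add: p_local_def)
qed

definition wdeg :: "nat \<Rightarrow> (nat + nat \<Rightarrow>\<^sub>0 nat) \<Rightarrow> nat" where
  "wdeg p m = (\<Sum>v\<in>Poly_Mapping.keys m. wt p v * Poly_Mapping.lookup m v)"

lemma wdeg_superset: "finite S \<Longrightarrow> Poly_Mapping.keys m \<subseteq> S \<Longrightarrow> wdeg p m = (\<Sum>v\<in>S. wt p v * Poly_Mapping.lookup m v)"
  unfolding wdeg_def by (rule sum.mono_neutral_left) (auto simp: in_keys_iff)

lemma wdeg_add: "wdeg p (m1 + m2) = wdeg p m1 + wdeg p m2"
proof -
  let ?S = "Poly_Mapping.keys m1 \<union> Poly_Mapping.keys m2"
  have "wdeg p (m1 + m2) = (\<Sum>v\<in>?S. wt p v * Poly_Mapping.lookup (m1 + m2) v)"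
    by (rule wdeg_superset) (auto dest: keys_add[THEN subsetD])
  also have "\<dots> = (\<Sum>v\<in>?S. wt p v * Poly_Mapping.lookup m1 v) + (\<Sum>v\<in>?S. wt p v * Poly_Mapping.lookup m2 v)"
    by (simp add: lookup_add algebra_simps sum.distrib)
  also have "\<dots> = wdeg p m1 + wdeg p m2"
    by (simp add: wdeg_superset[of ?S m1] wdeg_superset[of ?S m2])
  finally show ?thesis .
qed

lemma hom_iff: "homogeneous_of_degree p c d = (\<forall>m\<in>Poly_Mapping.keys c. wdeg p m = d)"
  by (simp add: homogeneous_of_degree_def wdeg_def)

lemma hom_add: "homogeneous_of_degree p f d \<Longrightarrow> homogeneous_of_degree p g d \<Longrightarrow> homogeneous_of_degree p (f + g) d"
  unfolding hom_iff using keys_add[of f g] by blast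

lemma hom_mult: "homogeneous_of_degree p f d1 \<Longrightarrow> homogeneous_of_degree p g d2 \<Longrightarrow> homogeneous_of_degree p (f * g) (d1 + d2)"
  unfolding hom_iff
proof
  fix m assume f: "\<forall>m\<in>Poly_Mapping.keys f. wdeg p m = d1" and g: "\<forall>m\<in>Poly_Mapping.keys g. wdeg p m = d2"
    and m: "m \<in> Poly_Mapping.keys (f * g)"
  from m keys_mult have "m \<in> {a + b | a b. a \<in> Poly_Mapping.keys f \<and> b \<in> Poly_Mapping.keys g}"
    by (rule subsetD[rotated])
  then obtain a b where "m = a + b" "a \<in> Poly_Mapping.keys f" "b \<in> Poly_Mapping.keys g" by blast
  with f g show "wdeg p m = d1 + d2" by (simp add: wdeg_add)
qed

lemma hom_eq: "homogeneous_of_degree p f d \<Longrightarrow> d = d' \<Longrightarrow> homogeneous_of_degree p f d'" by simp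

lemma hom_uminus: "homogeneous_of_degree p f d \<Longrightarrow> homogeneous_of_degree p (- f) d"
  by (simp add: homogeneous_of_degree_def)

lemma hom_1: "homogeneous_of_degree p (1 :: rat mpoly) 0"
  by (simp add: homogeneous_of_degree_def)

lemma hom_of_nat: "homogeneous_of_degree p (of_nat n :: rat mpoly) 0"
  by (simp add: homogeneous_of_degree_def flip: single_of_nat)

lemma hom_PX: "homogeneous_of_degree p (PX v :: rat mpoly) (wt p v)"
  by (simp add: homogeneous_of_degree_def PX_def)

lemma hom_power: "homogeneous_of_degree p (f :: rat mpoly) d \<Longrightarrow> homogeneous_of_degree p (f ^ n) (n * d)"
  by (induction n) (simp_all add: hom_1 hom_mult)

lemma hom_sum: "(\<And>x. x \<in> A \<Longrightarrow> homogeneous_of_degree p (F x :: rat mpoly) d) \<Longrightarrow> homogeneous_of_degree p (sum F A) d"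
  by (induction A rule: infinite_finite_induct) (simp_all add: hom_add, simp_all add: homogeneous_of_degree_def)

lemma hom_aa: "homogeneous_of_degree p (aa l :: rat mpoly) (2 * l * (p - 1))"
  using hom_PX[of p "Inl l"] by (cases "l = 0") (simp_all add: aa_def hom_1 wt_def)

lemma hom_cc: "p > 0 \<Longrightarrow> homogeneous_of_degree p (cc p i) (2 * i * (p - 1))"
  unfolding cc_alt EE_def
proof (intro hom_sum)
  fix l assume l: "l \<in> {0..i}"
  have "homogeneous_of_degree p (of_nat ((p - l) choose (i - l)) * (of_nat p ^ l * aa l) * (- PX (Inl 1)) ^ (i - l) :: rat mpoly)
     (0 + (l * 0 + 2 * l * (p - 1)) + (i - l) * wt p (Inl 1))"
    by (intro hom_mult hom_of_nat hom_power hom_aa hom_uminus hom_PX)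
  moreover have "0 + (l * 0 + 2 * l * (p - 1)) + (i - l) * wt p (Inl 1) = 2 * i * (p - 1)"
  proof -
    obtain d where d: "i = l + d" using l le_Suc_ex[of l i] by auto
    define q where "q = p - 1"
    have "0 + (l * 0 + 2 * l * q) + d * (2 * 1 * q) = 2 * (l + d) * q" by (simp add: algebra_simps)
    then show ?thesis using d by (simp add: wt_def q_def)
  qed
  ultimately show "homogeneous_of_degree p (of_nat ((p - l) choose (i - l)) * (of_nat p ^ l * aa l) * (- PX (Inl 1)) ^ (i - l)) (2 * i * (p - 1))"
    by (rule hom_eq)
qed

definition psi :: "nat \<Rightarrow> nat + nat \<Rightarrow> (nat \<Rightarrow>\<^sub>0 nat) \<Rightarrow>\<^sub>0 rat" where
  "psi p v = (case v of Inl j \<Rightarrow> if j = 1 then 0 else PC (1 / of_nat p ^ j) * PX j | Inr k \<Rightarrow> 0)"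

lemma PC_inv_pow: "p > 0 \<Longrightarrow> PC (1 / of_nat p ^ j :: rat) * of_nat p ^ j = (1 :: ('v \<Rightarrow>\<^sub>0 nat) \<Rightarrow>\<^sub>0 rat)"
  by (simp add: of_nat_PC PC_pow PC_mult[symmetric])

lemma a0_1: "p > 0 \<Longrightarrow> a0 p 1 = 0"
  using p_sP[of p] by (simp add: a0_def EE_one aa_def)

lemma cc_psi: "p > 0 \<Longrightarrow> j \<noteq> 1 \<Longrightarrow> psubst (cc p) (psi p (Inl j)) = a0 p j"
proof -
  assume p: "p > 0" and j: "j \<noteq> 1"
  have "psubst (cc p) (psi p (Inl j)) = (PC (1 / of_nat p ^ j) * of_nat p ^ j) * a0 p j"
    using j by (simp add: psi_def psubst_mult cc_def mult_ac)
  moreover have "PC (1 / of_nat p ^ j :: rat) * of_nat p ^ j = (1 :: rat mpoly)" by (rule PC_inv_pow[OF p])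
  ultimately show ?thesis by simp
qed

lemma psi_cc: "p > 0 \<Longrightarrow> 2 \<le> j \<Longrightarrow> psubst (psi p) (cc p j) = PX j"
proof -
  assume p: "p > 0" and j: "2 \<le> j"
  have s: "psubst (psi p) (sP p) = 0" by (simp add: sP_def psubst_mult psi_def)
  have "psubst (psi p) (a0 p j) = EE p (\<lambda>l. psubst (psi p) (aa l)) 0 j"
    unfolding a0_def psubst_EE by (simp add: psubst_uminus s)
  also have "\<dots> = psubst (psi p) (aa j)" by (rule EE_rho0)
  also have "\<dots> = PC (1 / of_nat p ^ j) * PX j" using j by (simp add: aa_def psi_def)
  finally have "psubst (psi p) (cc p j) = (of_nat p ^ j * PC (1 / of_nat p ^ j)) * PX j"
    by (simp add: cc_def psubst_mult psubst_power mult_ac)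
  moreover have "PC (1 / of_nat p ^ j :: rat) * of_nat p ^ j = (1 :: (nat \<Rightarrow>\<^sub>0 nat) \<Rightarrow>\<^sub>0 rat)" by (rule PC_inv_pow[OF p])
  ultimately show ?thesis by (simp add: mult.commute)
qed

lemma cs0: "f \<in> cobar_space p 0 \<longleftrightarrow> pvars f \<subseteq> Inl ` {1..p}"
  by (simp add: cobar_space_def)

lemma cd0: "cobar_d p 0 f = face0 p f - f"
  by (simp add: cobar_d_def)

lemma set_eq:
  assumes p: "p > 0"
  shows "{f \<in> cobar_space p 0. cobar_d p 0 f = 0}
       = psubst (cc p) ` {g :: (nat \<Rightarrow>\<^sub>0 nat) \<Rightarrow>\<^sub>0 rat. pvars g \<subseteq> {2..p}}"
proof
  show "{f \<in> cobar_space p 0. cobar_d p 0 f = 0} \<subseteq> psubst (cc p) ` {g. pvars g \<subseteq> {2..p}}"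
  proof
    fix f assume "f \<in> {f \<in> cobar_space p 0. cobar_d p 0 f = 0}"
    then have fv: "pvars f \<subseteq> Inl ` {1..p}" and ff: "face0 p f = f" by (auto simp: cs0 cd0)
    define g where "g = psubst (psi p) f"
    have "pvars g \<subseteq> {2..p}"
      unfolding g_def
    proof (rule pvars_psubstI)
      fix v assume "v \<in> pvars f"
      with fv obtain j where j: "v = Inl j" "1 \<le> j" "j \<le> p" by auto
      show "pvars (psi p v) \<subseteq> {2..p}"
      proof (cases "j = 1")
        case True then show ?thesis using j by (simp add: psi_def)
      next
        case False
        have "pvars (PC (1 / of_nat p ^ j) * PX j :: (nat \<Rightarrow>\<^sub>0 nat) \<Rightarrow>\<^sub>0 rat) \<subseteq> {j}"
          by (intro pvars_multI) (simp_all add: pvars_PX)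
        moreover have "{j} \<subseteq> {2..p}" using j False by auto
        ultimately have "pvars (PC (1 / of_nat p ^ j) * PX j :: (nat \<Rightarrow>\<^sub>0 nat) \<Rightarrow>\<^sub>0 rat) \<subseteq> {2..p}"
          by (rule order_trans)
        then show ?thesis using j False by (simp add: psi_def)
      qed
    qed
    moreover have "psubst (cc p) g = f"
    proof -
      have "psubst (cc p) g = psubst (\<lambda>v. psubst (cc p) (psi p v)) f" by (simp add: g_def psubst_comp)
      also have "\<dots> = psubst (hsub p) f"
      proof (rule psubst_cong)
        fix v assume "v \<in> pvars f"
        with fv obtain j where j: "v = Inl j" by auto
        show "psubst (cc p) (psi p v) = hsub p v"
        proof (cases "j = 1")
          case True then show ?thesis using j a0_1[OF p] by (simp add: psi_def hsub_def)
        next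
          case False then show ?thesis using j cc_psi[OF p False] by (simp add: hsub_def)
        qed
      qed
      also have "\<dots> = hh p (face0 p f)" by (simp add: hh_def ff)
      also have "\<dots> = f" using fv by (intro h_face0[OF p, of _ 0]) auto
      finally show ?thesis .
    qed
    ultimately show "f \<in> psubst (cc p) ` {g. pvars g \<subseteq> {2..p}}" by blast
  qed
next
  show "psubst (cc p) ` {g. pvars g \<subseteq> {2..p}} \<subseteq> {f \<in> cobar_space p 0. cobar_d p 0 f = 0}"
  proof
    fix f assume "f \<in> psubst (cc p) ` {g. pvars g \<subseteq> {2..p}}"
    then obtain g where g: "pvars g \<subseteq> {2..p}" and f: "f = psubst (cc p) g" by blast
    have "pvars f \<subseteq> Inl ` {1..p}"
      unfolding f
    proof (rule pvars_psubstI)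
      fix v assume "v \<in> pvars g"
      then have "v \<le> p" using g by auto
      then show "pvars (cc p v) \<subseteq> Inl ` {1..p}" by (rule pvars_cc[OF p])
    qed
    moreover have "face0 p f = f"
    proof -
      have "face0 p f = psubst (\<lambda>v. face0 p (cc p v)) g" by (simp add: f face0_eq psubst_comp)
      also have "\<dots> = f" unfolding f using g cc_face0[OF p] by (intro psubst_cong) auto
      finally show ?thesis .
    qed
    ultimately show "f \<in> {f \<in> cobar_space p 0. cobar_d p 0 f = 0}" by (simp add: cs0 cd0)
  qed
qed

lemma inj_cc:
  assumes p: "p > 0"
  shows "inj_on (psubst (cc p)) {g :: (nat \<Rightarrow>\<^sub>0 nat) \<Rightarrow>\<^sub>0 rat. pvars g \<subseteq> {2..p}}"
proof (rule inj_on_inverseI)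
  fix g :: "(nat \<Rightarrow>\<^sub>0 nat) \<Rightarrow>\<^sub>0 rat" assume g: "g \<in> {g. pvars g \<subseteq> {2..p}}"
  have "psubst (psi p) (psubst (cc p) g) = psubst (\<lambda>v. psubst (psi p) (cc p v)) g" by (rule psubst_comp)
  also have "\<dots> = g" using g psi_cc[OF p] by (intro psubst_fix) auto
  finally show "psubst (psi p) (psubst (cc p) g) = g" .
qed

theorem mainTheorem1:
  fixes p :: nat
  assumes "prime p"
  shows "\<exists>c :: nat \<Rightarrow> rat mpoly.
     (\<forall>i\<in>{2..p}. in_A p (c i) \<and> homogeneous_of_degree p (c i) (2 * i * (p - 1))
                  \<and> eta_R p (c i) = c i)
   \<and> {f \<in> cobar_space p 0. cobar_d p 0 f = 0}
       = psubst c ` {g :: (nat \<Rightarrow>\<^sub>0 nat) \<Rightarrow>\<^sub>0 rat. pvars g \<subseteq> {2..p}}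
   \<and> inj_on (psubst c) {g :: (nat \<Rightarrow>\<^sub>0 nat) \<Rightarrow>\<^sub>0 rat. pvars g \<subseteq> {2..p}}
   \<and> (\<forall>n\<ge>1. \<forall>f\<in>cobar_space p n. cobar_d p n f = 0 \<longrightarrow>
          (\<exists>g\<in>cobar_space p (n - 1). cobar_d p (n - 1) g = f))"
proof -
  have p: "p > 0" using assms prime_gt_0_nat by blast
  show ?thesis
  proof (intro exI[of _ "cc p"] conjI ballI)
    fix i assume i: "i \<in> {2..p}"
    then show "in_A p (cc p i)" using in_A_cc[OF p] by simp
    show "homogeneous_of_degree p (cc p i) (2 * i * (p - 1))" by (rule hom_cc[OF p])
    show "eta_R p (cc p i) = cc p i" using i cc_eta[OF p] by simp
  next
    show "{f \<in> cobar_space p 0. cobar_d p 0 f = 0} = psubst (cc p) ` {g. pvars g \<subseteq> {2..p}}"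
      by (rule set_eq[OF p])
    show "inj_on (psubst (cc p)) {g. pvars g \<subseteq> {2..p}}" by (rule inj_cc[OF p])
    show "\<forall>n\<ge>1. \<forall>f\<in>cobar_space p n. cobar_d p n f = 0 \<longrightarrow>
          (\<exists>g\<in>cobar_space p (n - 1). cobar_d p (n - 1) g = f)" by (rule acyclic[OF p])
  qed
qed

end
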